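(* Let $\mathbb{K}$ be a field and let $f,g,u,v$ be endomorphisms of the additive group $(\mathbb{K},+)$ such that $$\forall (x,t)\in\mathbb{K}^2,\quad g(t^2x)+v(tx)=t\,f(x)+t\,u(tx).$$ (a) If $\mathbb{K}$ has characteristic not $2$, there are scalars $\lambda,\mu$ such that $f(x)=\lambda x$, $u(x)=\mu x$, $v(x)=\lambda x$ and $g(x)=\mu x$ for all $x$. (b) If $\mathbb{K}$ has characteristic $2$, there are scalars $\lambda,\mu$ and a root-linear form $\alpha$ on $\mathbb{K}$ such that $f(x)=\lambda x+\alpha(x)$, $u(x)=\mu x$, $v(x)=\lambda x$ and $g(x)=\mu x+\alpha(x)$ for all $x$.
   Context: In characteristic $2$, a root-linear form on $\mathbb{K}$ is an additive map $\alpha:\mathbb{K}\to\mathbb{K}$ with $\alpha(\lambda^2x)=\lambda\alpha(x)$ for all $\lambda,x\in\mathbb{K}$. *)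

theory Defs
  imports Main
begin

definition additive_endo :: "('a::field \<Rightarrow> 'a) \<Rightarrow> bool" where
  "additive_endo f \<longleftrightarrow> (\<forall>x y. f (x + y) = f x + f y)"

definition root_linear :: "('a::field \<Rightarrow> 'a) \<Rightarrow> bool" where
  "root_linear \<alpha> \<longleftrightarrow> additive_endo \<alpha> \<and> (\<forall>l x. \<alpha> (l^2 * x) = l * \<alpha> x)"

end

theory Submission imports Defs begin
lemma addD: assumes "additive_endo f" shows "f (a+b) = f a + f b" "f 0 = 0" "f (-a) = - f a" "f (a - b) = f a - f b"
proof -
  show 1: "f (a+b) = f a + f b" for a b using assms unfolding additive_endo_def by blast
  show 0: "f 0 = 0" using 1[of 0 0] by (metis add.right_neutral add_left_cancel)
  show 2: "f (-a) = - f a" for a using 1[of a "-a"] 0 by (simp add: eq_neg_iff_add_eq_0 add.commute)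
  show "f (a - b) = f a - f b" using 1[of a "-b"] 2[of b] by simp
qed

theorem lemma3p1:
  fixes f g u v :: "'a::field \<Rightarrow> 'a"
  assumes "additive_endo f" "additive_endo g" "additive_endo u" "additive_endo v"
    and eq: "\<forall>x t. g (t^2 * x) + v (t * x) = t * f x + t * u (t * x)"
  shows "((2::'a) \<noteq> 0 \<longrightarrow>
            (\<exists>lam mu. \<forall>x. f x = lam * x \<and> u x = mu * x \<and> v x = lam * x \<and> g x = mu * x))
       \<and> ((2::'a) = 0 \<longrightarrow>
            (\<exists>lam mu \<alpha>. root_linear \<alpha> \<and>
               (\<forall>x. f x = lam * x + \<alpha> x \<and> u x = mu * x \<and> v x = lam * x \<and> g x = mu * x + \<alpha> x)))"
proof -
  note fa = addD[OF assms(1)] and ga = addD[OF assms(2)] and ua = addD[OF assms(3)] and va = addD[OF assms(4)]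
  have E: "\<And>x t. g (t^2 * x) + v (t * x) = t * f x + t * u (t * x)" using eq by blast
  have E1: "g x + v x = f x + u x" for x using E[where x=x and t=1] by simp
  have key: "2 * g (t*x) = t * u x + u (t*x)" for t x
  proof -
    have A: "g ((t+1)^2 * x) + v ((t+1) * x) = (t+1) * f x + (t+1) * u ((t+1) * x)" by (rule E)
    have "(t+1)^2*x = t^2*x + (t*x + t*x) + x" by (simp add: power2_eq_square algebra_simps)
    then have "g ((t+1)^2*x) = g (t^2*x) + (g (t*x) + g (t*x)) + g x" by (simp only: ga(1))
    moreover have "(t+1)*x = t*x + x" by (simp add: algebra_simps)
    ultimately have A': "g (t^2*x) + (g (t*x) + g (t*x)) + g x + (v (t*x) + v x) = (t+1) * f x + (t+1) * (u (t*x) + u x)"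
      using A by (simp only: va(1) ua(1))
    note B = E[where x=x and t=t] and C = E1[of x]
    have "2 * g (t*x) - (t * u x + u (t*x)) =
      ((g (t^2*x) + (g (t*x) + g (t*x)) + g x + (v (t*x) + v x)) - ((t+1) * f x + (t+1) * (u (t*x) + u x)))
      - ((g (t^2 * x) + v (t * x)) - (t * f x + t * u (t * x))) - ((g x + v x) - (f x + u x))"
      by (simp add: algebra_simps)
    also have "\<dots> = 0" using A' B C by simp
    finally show ?thesis by simp
  qed
  have part1: "\<exists>lam mu. \<forall>x. f x = lam * x \<and> u x = mu * x \<and> v x = lam * x \<and> g x = mu * x"
    if h2: "(2::'a) \<noteq> 0"
  proof -
    have ul: "u x = u 1 * x" for x
    proof -
      have "2 * g x = 2 * u x" using key[where t=1 and x=x] by (simp add: algebra_simps)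
      then have "g x = u x" using h2 by simp
      then have "u x + u x = 2 * g x" by (metis mult_2)
      also have "2 * g x = x * u 1 + u x" using key[where t=x and x=1] by simp
      finally have "u x + u x = x * u 1 + u x" .
      then show ?thesis by (simp add: mult.commute)
    qed
    have gl: "g x = u 1 * x" for x
    proof -
      have "2 * g x = 2 * (u 1 * x)" using key[where t=1 and x=x] ul[of x] by (simp add: algebra_simps)
      then show ?thesis using h2 by simp
    qed
    have vt: "v (t*x) = t * f x" for t x
      using E[where x=x and t=t] gl[of "t^2*x"] ul[of "t*x"] by (simp add: power2_eq_square algebra_simps)
    have vf: "v x = f x" for x using vt[of 1 x] by simp
    have vl: "v x = f 1 * x" for x using vt[of x 1] by (simp add: mult.commute)
    show ?thesis
      by (rule exI[of _ "f 1"], rule exI[of _ "u 1"]) (metis ul gl vf vl)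
  qed
  have part2: "\<exists>lam mu \<alpha>. root_linear \<alpha> \<and>
               (\<forall>x. f x = lam * x + \<alpha> x \<and> u x = mu * x \<and> v x = lam * x \<and> g x = mu * x + \<alpha> x)"
    if h2: "(2::'a) = 0"
  proof -
    have neg: "- a = (a::'a)" for a
    proof -
      have "a + a = 2 * a" by (simp add: algebra_simps)
      then have "a + a = 0" using h2 by simp
      then show ?thesis by (simp add: eq_neg_iff_add_eq_0)
    qed
    have ut: "u (t*x) = t * u x" for t x
    proof -
      have "0 = t * u x + u (t*x)" using key[of t x] h2 by simp
      then have "u (t*x) = - (t * u x)" by (simp add: eq_neg_iff_add_eq_0 add.commute)
      then show ?thesis using neg by simp
    qed
    define mu where "mu = u 1"
    have ul: "u x = mu * x" for x using ut[of x 1] by (simp add: mu_def mult.commute)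
    define al where "al x = g x - mu * x" for x
    have ala: "al (a + b) = al a + al b" for a b by (simp add: al_def ga algebra_simps)
    have fv: "f x = al x + v x" for x using E1[of x] ul[of x] by (simp add: al_def algebra_simps)
    define D where "D t x = v (t*x) - t * v x" for t x
    have Dv: "D t x = t * al x - al (t^2 * x)" for t x
      using E[where x=x and t=t] fv[of x] ul[of "t*x"]
      by (simp add: D_def al_def power2_eq_square algebra_simps)
    have D1: "D (t*s) x = D t (s*x) + t * D s x" for t s x
      by (simp add: D_def algebra_simps)
    have D2: "D (t*s) x = D t (s^2*x) + t * D s x" for t s x
      unfolding Dv by (simp add: power2_eq_square algebra_simps)
    have Dsub: "D t (a - b) = D t a - D t b" for t a b
      by (simp add: D_def va algebra_simps)
    have D0: "D t ((s^2 - s) * x) = 0" for t s x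
    proof -
      have "D t (s*x) = D t (s^2*x)" using D1[of t s x] D2[of t s x] by simp
      then show ?thesis using Dsub[of t "s^2*x" "s*x"] by (simp add: algebra_simps)
    qed
    have DZ: "D t y = 0" for t y
    proof (cases "t^2 = t")
      case True
      then have "t * (t - 1) = 0" by (simp add: power2_eq_square algebra_simps)
      then have "t = 0 \<or> t = 1" by simp
      then show ?thesis by (auto simp: D_def va)
    next
      case False
      then have nz: "t^2 - t \<noteq> 0" by simp
      have "y = (t^2 - t) * (y / (t^2 - t))" using nz by simp
      then show ?thesis using D0[of t t "y / (t^2 - t)"] by metis
    qed
    have vt: "v (t*x) = t * v x" for t x using DZ[of t x] by (simp add: D_def)
    have vl: "v x = v 1 * x" for x using vt[of x 1] by (simp add: mult.commute)
    have alr: "al (l^2 * x) = l * al x" for l x using DZ[of l x] Dv[of l x] by simp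
    have rl: "root_linear al"
      unfolding root_linear_def additive_endo_def using ala alr by blast
    show ?thesis
      apply (rule exI[of _ "v 1"], rule exI[of _ mu], rule exI[of _ al])
      using rl
    proof (intro conjI allI)
      fix x
      show "f x = v 1 * x + al x" using fv[of x] vl[of x] by (simp add: add.commute)
      show "u x = mu * x" by (rule ul)
      show "v x = v 1 * x" by (rule vl)
      show "g x = mu * x + al x" by (simp add: al_def)
    qed
  qed
  show ?thesis using part1 part2 by blast
qed
end
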